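(* Let $(G,c)$ and $(H,c')$ be BPEC-DAGs on the same vertex set $V$. If $\mathcal M(G,c)=\mathcal M(H,c')$, then $G=H$ and $c$ and $c'$ induce the same partition of the edge set into color classes; i.e., each BPEC-DAG is the unique BPEC-DAG in its model equivalence class.
   Context: An edge-colored DAG $(G,c)$, $G=(V,E)$, has a coloring of $V\sqcup E$ (vertex and edge colors disjoint) in which every vertex forms its own color class. It is properly edge-colored if every edge color class contains at least two edges, and blocked if any two edges $ij,kl$ of the same color satisfy $j=l$. A BPEC-DAG is a blocked, properly edge-colored DAG. $\mathcal M(G,c)$ is the set of $(I-\Lambda)^{-T}\Omega(I-\Lambda)^{-1}$ with $\Omega=\mathrm{diag}(\omega_i)$, $\omega_i>0$, $\lambda_{ij}=0$ for $ij\notin E$, and $\lambda_{ij}=\lambda_{kl}$ whenever $c(ij)=c(kl)$. *)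

theory Defs
  imports "HOL-Analysis.Analysis"
begin

text \<open>A DAG on the vertex set given by the finite type 'v: an edge relation
  E, where (i,j) \<in> E denotes the directed edge i \<rightarrow> j, which is acyclic.
  Vertex colors are all singletons and disjoint from edge colors, so they
  carry no information; the coloring is represented by its edge part
  c :: 'v \<times> 'v \<Rightarrow> 'c, only relevant on E.\<close>

definition is_DAG :: "('v \<times> 'v) set \<Rightarrow> bool" where
  "is_DAG E \<longleftrightarrow> acyclic E"

definition properly_edge_colored :: "('v \<times> 'v) set \<Rightarrow> ('v \<times> 'v \<Rightarrow> 'c) \<Rightarrow> bool" where
  "properly_edge_colored E c \<longleftrightarrow>
     (\<forall>e \<in> E. 2 \<le> card {f \<in> E. c f = c e})"

definition blocked :: "('v \<times> 'v) set \<Rightarrow> ('v \<times> 'v \<Rightarrow> 'c) \<Rightarrow> bool" where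
  "blocked E c \<longleftrightarrow>
     (\<forall>i j k l. (i, j) \<in> E \<longrightarrow> (k, l) \<in> E \<longrightarrow> c (i, j) = c (k, l) \<longrightarrow> j = l)"

definition BPEC_DAG :: "('v \<times> 'v) set \<Rightarrow> ('v \<times> 'v \<Rightarrow> 'c) \<Rightarrow> bool" where
  "BPEC_DAG E c \<longleftrightarrow> is_DAG E \<and> properly_edge_colored E c \<and> blocked E c"

definition model :: "('v::finite \<times> 'v) set \<Rightarrow> ('v \<times> 'v \<Rightarrow> 'c) \<Rightarrow> (real^'v^'v) set" where
  "model E c = {transpose (matrix_inv (mat 1 - \<Lambda>)) ** (\<chi> i j. if i = j then \<omega> i else 0)
                   ** matrix_inv (mat 1 - \<Lambda>) |
      \<Lambda> \<omega>. (\<forall>i. 0 < \<omega> i) \<and>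
            (\<forall>i j. (i, j) \<notin> E \<longrightarrow> \<Lambda> $ i $ j = 0) \<and>
            (\<forall>i j k l. (i, j) \<in> E \<longrightarrow> (k, l) \<in> E \<longrightarrow> c (i, j) = c (k, l) \<longrightarrow>
                        \<Lambda> $ i $ j = \<Lambda> $ k $ l)}"

end

theory Submission
  imports Defs
begin


definition K0 :: "'v set \<Rightarrow> 'v \<Rightarrow> 'v \<Rightarrow> 'v \<Rightarrow> real" where
  "K0 C k a b = (if a = b then 1 else 0) + (if a \<in> C \<and> b \<in> C then 1 else 0)
     - (if a = k \<and> b \<in> C then 1 else 0) - (if a \<in> C \<and> b = k then 1 else 0)"

lemma core:
  fixes F :: "('v::finite \<times> 'v) set" and lam :: "'v \<Rightarrow> 'v \<Rightarrow> real" and d :: "'v \<Rightarrow> real"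
    and c' :: "'v \<times> 'v \<Rightarrow> 'd"
  assumes acyc: "acyclic F" and blk: "blocked F c'" and prp: "properly_edge_colored F c'"
    and supp: "\<forall>a b. (a,b) \<notin> F \<longrightarrow> lam a b = 0"
    and col: "\<forall>i j k l. (i,j)\<in>F \<longrightarrow> (k,l)\<in>F \<longrightarrow> c'(i,j) = c'(k,l) \<longrightarrow> lam i j = lam k l"
    and kC: "k \<notin> C"
    and K: "\<And>a b. (\<Sum>j\<in>UNIV. ((if a = j then 1 else 0) - lam a j) * d j * ((if b = j then 1 else 0) - lam b j)) = K0 C k a b"
  shows "\<forall>a. lam a k = (if a \<in> C then 1 else 0)"
proof -
  have noloop: "\<And>a. (a,a) \<notin> F" using acyc unfolding acyclic_def by blast
  have lam0: "\<And>a. lam a a = 0" using supp noloop by blast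
  have asym: "\<And>a b. (a,b) \<in> F \<Longrightarrow> (b,a) \<notin> F"
    using acyc unfolding acyclic_def by (meson trancl.r_into_trancl trancl_trans)
  have formula: "K0 C k a x = ((if a = x then 1 else 0) - lam a x) * d x - lam x a"
    if H: "\<forall>j. (x,j) \<in> F \<longrightarrow> (\<forall>a. lam a j = 0) \<and> d j = 1" for x a
  proof -
    have trm: "((if a = j then 1 else 0) - lam a j) * d j * ((if x = j then 1 else 0) - lam x j)
        = (if j = x then ((if a = x then 1 else 0) - lam a x) * d x else 0) - (if j = a then lam x a else 0)" for j
    proof (cases "j = x")
      case True then show ?thesis using lam0 by auto
    next
      case False
      show ?thesis
      proof (cases "(x,j) \<in> F")
        case True
        then have "lam a j = 0" "d j = 1" using H by auto
        then show ?thesis using False by auto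
      next
        case nF: False
        then have "lam x j = 0" using supp by blast
        then show ?thesis using False by auto
      qed
    qed
    have "K0 C k a x = (\<Sum>j\<in>UNIV. ((if a = j then 1 else 0) - lam a j) * d j * ((if x = j then 1 else 0) - lam x j))"
      using K by simp
    also have "\<dots> = (\<Sum>j\<in>UNIV. (if j = x then ((if a = x then 1 else 0) - lam a x) * d x else 0) - (if j = a then lam x a else 0))"
      using trm by simp
    also have "\<dots> = ((if a = x then 1 else 0) - lam a x) * d x - lam x a"
      by (simp add: sum_subtractf)
    finally show ?thesis .
  qed
  define S where "S = insert k C"
  define clean where "clean x \<longleftrightarrow> (\<forall>y. (x,y) \<in> F\<^sup>* \<longrightarrow> y \<notin> S)" for x
  have wfF: "wf (F\<inverse>)" by (rule finite_acyclic_wf_converse[OF _ acyc]) simp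
  have cleanlem: "clean x \<longrightarrow> (\<forall>a. lam a x = 0) \<and> d x = 1" for x
  proof (induction x rule: wf_induct[OF wfF])
    case (1 x)
    show ?case
    proof
      assume cx: "clean x"
      have H: "\<forall>j. (x,j) \<in> F \<longrightarrow> (\<forall>a. lam a j = 0) \<and> d j = 1"
      proof (intro allI impI)
        fix j assume xj: "(x,j) \<in> F"
        have "clean j" using cx xj unfolding clean_def
          by (meson converse_rtrancl_into_rtrancl)
        then show "(\<forall>a. lam a j = 0) \<and> d j = 1" using 1 xj by blast
      qed
      have xS: "x \<notin> S" using cx unfolding clean_def by blast
      have Kx: "K0 C k a x = (if a = x then 1 else 0)" for a
        using xS unfolding K0_def S_def by auto
      have dx: "d x = 1" using formula[OF H, of x] Kx[of x] lam0 by simp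
      have "lam a x = 0" for a
      proof (rule ccontr)
        assume ne: "lam a x \<noteq> 0"
        then have "(a,x) \<in> F" using supp by blast
        then have "lam x a = 0" using asym supp by blast
        moreover have "a \<noteq> x" using ne lam0 by auto
        ultimately show False using formula[OF H, of a] Kx[of a] dx ne by simp
      qed
      then show "(\<forall>a. lam a x = 0) \<and> d x = 1" using dx by blast
    qed
  qed
  have wfT: "wf ((F\<^sup>+)\<inverse>)" using wfF by (simp add: trancl_converse[symmetric] wf_trancl)
  obtain t where tS: "t \<in> S" and tmin: "\<And>y. (t,y) \<in> F\<^sup>+ \<Longrightarrow> y \<notin> S"
    using wfT[unfolded wf_eq_minimal, rule_format, of k S] S_def by auto
  have H: "\<forall>j. (t,j) \<in> F \<longrightarrow> (\<forall>a. lam a j = 0) \<and> d j = 1"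
  proof (intro allI impI)
    fix j assume tj: "(t,j) \<in> F"
    have "clean j" unfolding clean_def using tj tmin
      by (meson rtrancl_into_trancl2)
    then show "(\<forall>a. lam a j = 0) \<and> d j = 1" using cleanlem by blast
  qed
  have tF: "lam t y = 0" if "y \<in> S" for y
  proof (rule ccontr)
    assume "lam t y \<noteq> 0"
    then have "(t,y) \<in> F" using supp by blast
    then show False using tmin that by blast
  qed
  have tk: "t = k"
  proof (rule ccontr)
    assume "t \<noteq> k"
    then have tC: "t \<in> C" using tS S_def by auto
    have "K0 C k k t = -1" using tC kC unfolding K0_def by auto
    moreover have "lam t k = 0" using tF S_def by auto
    ultimately have e1: "lam k t * d t = 1" using formula[OF H, of k] \<open>t \<noteq> k\<close> by simp
    then have "lam k t \<noteq> 0" by auto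
    then have kt: "(k,t) \<in> F" using supp by blast
    have "2 \<le> card {f \<in> F. c' f = c' (k,t)}" using prp kt unfolding properly_edge_colored_def by blast
    then obtain f where fF: "f \<in> F" and cf: "c' f = c' (k,t)" and fne: "f \<noteq> (k,t)"
    proof -
      assume r: "\<And>f. f \<in> F \<Longrightarrow> c' f = c' (k, t) \<Longrightarrow> f \<noteq> (k, t) \<Longrightarrow> thesis"
      show thesis
      proof (rule ccontr)
        assume "\<not> thesis"
        then have "{f \<in> F. c' f = c' (k,t)} \<subseteq> {(k,t)}" using r by blast
        then have "card {f \<in> F. c' f = c' (k,t)} \<le> card {(k,t)}"
          by (rule card_mono[rotated]) simp
        then show False using \<open>2 \<le> card _\<close> by simp
      qed
    qed
    obtain k' t' where f: "f = (k',t')" by (cases f)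
    have "t' = t" using blk[unfolded blocked_def, rule_format, of k' t' k t] fF kt cf f by simp
    then have k'F: "(k',t) \<in> F" and k'k: "k' \<noteq> k" using fF fne f by auto
    have eq: "lam k' t = lam k t" using col k'F kt cf f \<open>t' = t\<close> by blast
    have k't: "k' \<noteq> t" using k'F noloop by blast
    have "lam t k' = 0" using asym k'F supp by blast
    then have "K0 C k k' t = -1" using formula[OF H, of k'] k't eq e1 by (simp add: algebra_simps)
    moreover have "K0 C k k' t \<ge> 0" using k'k k't tC unfolding K0_def by auto
    ultimately show False by simp
  qed
  have dk: "d k = 1" using formula[OF H, of k] tk lam0 kC unfolding K0_def by simp
  show ?thesis
  proof
    fix a
    show "lam a k = (if a \<in> C then 1 else 0)"
    proof (cases "a = k")
      case True then show ?thesis using lam0 kC by simp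
    next
      case ak: False
      show ?thesis
      proof (cases "a \<in> C")
        case True
        have "lam k a = 0" using tF tk True S_def by auto
        moreover have "K0 C k a k = -1" using True ak kC unfolding K0_def by auto
        ultimately show ?thesis using formula[OF H, of a] tk dk ak True by simp
      next
        case False
        have K0: "K0 C k a k = 0" using False ak kC unfolding K0_def by auto
        show ?thesis
        proof (rule ccontr)
          assume ne: "lam a k \<noteq> (if a \<in> C then 1 else 0)"
          then have "lam a k \<noteq> 0" using False by simp
          then have "(a,k) \<in> F" using supp by blast
          then have "lam k a = 0" using asym supp by blast
          then show False using formula[OF H, of a] tk dk ak K0 \<open>lam a k \<noteq> 0\<close> by simp
        qed
      qed
    qed
  qed
qed



lemma sq_K:
  fixes C :: "'v::finite set"
  assumes kC: "k \<notin> C"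
  defines "A \<equiv> (mat 1 - (\<chi> a b. if b = k \<and> a \<in> C then 1 else 0) :: real^'v^'v)"
  shows "A ** transpose A = (\<chi> a b. K0 C k a b)"
proof -
  define p where "p a j = (if j = k \<and> a \<in> C then 1 else (0::real))" for a j
  define q where "q a j = (if a = j then 1 else (0::real))" for a j :: 'v
  have Aent: "A $ a $ j = q a j - p a j" for a j unfolding A_def p_def q_def by (simp add: mat_def)
  have e1: "(\<Sum>j\<in>UNIV. q a j * q b j) = q a b" for a b
  proof -
    have "(\<Sum>j\<in>UNIV. q a j * q b j) = (\<Sum>j\<in>UNIV. if j = a then q a b else 0)"
      by (rule sum.cong) (auto simp: q_def)
    then show ?thesis by simp
  qed
  have e2: "(\<Sum>j\<in>UNIV. q a j * p b j) = (if a = k \<and> b \<in> C then 1 else 0)" for a b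
  proof -
    have "(\<Sum>j\<in>UNIV. q a j * p b j) = (\<Sum>j\<in>UNIV. if j = a then p b a else 0)"
      by (rule sum.cong) (auto simp: q_def)
    then show ?thesis by (simp add: p_def)
  qed
  have e3: "(\<Sum>j\<in>UNIV. p a j * q b j) = (if a \<in> C \<and> b = k then 1 else 0)" for a b
  proof -
    have "(\<Sum>j\<in>UNIV. p a j * q b j) = (\<Sum>j\<in>UNIV. if j = b then p a b else 0)"
      by (rule sum.cong) (auto simp: q_def)
    then show ?thesis by (simp add: p_def)
  qed
  have e4: "(\<Sum>j\<in>UNIV. p a j * p b j) = (if a \<in> C \<and> b \<in> C then 1 else 0)" for a b
  proof -
    have "(\<Sum>j\<in>UNIV. p a j * p b j) = (\<Sum>j\<in>UNIV. if j = k then (if a \<in> C \<and> b \<in> C then 1 else 0) else 0)"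
      by (rule sum.cong) (auto simp: p_def)
    then show ?thesis by simp
  qed
  have "(A ** transpose A) $ a $ b = K0 C k a b" for a b
  proof -
    have "(A ** transpose A) $ a $ b = (\<Sum>j\<in>UNIV. (q a j - p a j) * (q b j - p b j))"
      by (simp add: matrix_matrix_mult_def transpose_def Aent)
    also have "\<dots> = (\<Sum>j\<in>UNIV. q a j * q b j) - (\<Sum>j\<in>UNIV. q a j * p b j) - (\<Sum>j\<in>UNIV. p a j * q b j) + (\<Sum>j\<in>UNIV. p a j * p b j)"
    proof -
      have "(\<Sum>j\<in>UNIV. (q a j - p a j) * (q b j - p b j)) = (\<Sum>j\<in>UNIV. q a j * q b j - q a j * p b j - p a j * q b j + p a j * p b j)"
        by (rule sum.cong) (auto simp: algebra_simps)
      also have "\<dots> = (\<Sum>j\<in>UNIV. q a j * q b j) - (\<Sum>j\<in>UNIV. q a j * p b j) - (\<Sum>j\<in>UNIV. p a j * q b j) + (\<Sum>j\<in>UNIV. p a j * p b j)"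
        by (simp only: sum.distrib sum_subtractf)
      finally show ?thesis .
    qed
    also have "\<dots> = K0 C k a b" by (simp only: e1 e2 e3 e4) (simp add: K0_def q_def)
    finally show ?thesis .
  qed
  then show ?thesis by (simp add: vec_eq_iff)
qed



lemma mm_diff_r: "((A::'a::ring_1^'n::finite^'m) - B) ** (C::'a^'p^'n) = A ** C - B ** C"
  by (vector matrix_matrix_mult_def sum_subtractf left_diff_distrib)

lemma mm_add_r: "((A::'a::ring_1^'n::finite^'m) + B) ** (C::'a^'p^'n) = A ** C + B ** C"
  by (vector matrix_matrix_mult_def sum.distrib distrib_right)

lemma inv_eq:
  fixes A X :: "real^'n::finite^'n"
  assumes AX: "A ** X = mat 1"
  shows "A ** matrix_inv A = mat 1 \<and> matrix_inv A ** A = mat 1 \<and> matrix_inv A = X"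
proof -
  have XA: "X ** A = mat 1" using AX matrix_left_right_inverse by blast
  have "\<exists>Y. A ** Y = mat 1 \<and> Y ** A = mat 1" using AX XA by blast
  then have Y: "A ** matrix_inv A = mat 1 \<and> matrix_inv A ** A = mat 1"
    unfolding matrix_inv_def by (rule someI_ex)
  have "matrix_inv A = (X ** A) ** matrix_inv A" using XA by simp
  also have "\<dots> = X ** (A ** matrix_inv A)" by (simp add: matrix_mul_assoc)
  also have "\<dots> = X" using Y by simp
  finally show ?thesis using Y by blast
qed

lemma acyc_inv:
  fixes L :: "real^'v::finite^'v"
  assumes acyc: "acyclic F" and supp: "\<forall>a b. (a,b) \<notin> F \<longrightarrow> L$a$b = 0"
  shows "\<exists>X. (mat 1 - L) ** X = mat 1"
proof -
  have ker: "\<forall>x. (mat 1 - L) *v x = 0 \<longrightarrow> x = 0"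
  proof (intro allI impI)
    fix x :: "real^'v" assume "(mat 1 - L) *v x = 0"
    then have xe: "x = L *v x" by (simp add: matrix_vector_mult_diff_rdistrib)
    have wfF: "wf (F\<inverse>)" by (rule finite_acyclic_wf_converse[OF _ acyc]) simp
    have "x $ a = 0" for a
    proof (induction a rule: wf_induct[OF wfF])
      case (1 a)
      have "x $ a = (L *v x) $ a" using xe by simp
      also have "\<dots> = (\<Sum>b\<in>UNIV. L$a$b * x$b)" by (simp add: matrix_vector_mult_def)
      also have "\<dots> = 0"
      proof (rule sum.neutral, intro ballI)
        fix b show "L$a$b * x$b = 0"
        proof (cases "(a,b) \<in> F")
          case True then show ?thesis using 1 by simp
        next
          case False then show ?thesis using supp by simp
        qed
      qed
      finally show ?case .
    qed
    then show "x = 0" by (simp add: vec_eq_iff)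
  qed
  then obtain B where "B ** (mat 1 - L) = mat 1" using matrix_left_invertible_ker by blast
  then show ?thesis using matrix_left_right_inverse by blast
qed



lemma diag_entry:
  "((A::real^'n::finite^'n) ** (\<chi> i j. if i = j then d i else 0) ** transpose A) $ a $ b = (\<Sum>j\<in>UNIV. A$a$j * d j * A$b$j)"
  by (simp add: matrix_matrix_mult_def transpose_def if_distrib if_distribR sum.If_cases mult.commute)

lemma diag_mult:
  "((\<chi> i j. if i = j then d i else 0) ** (\<chi> i j. if i = j then e i else 0) :: real^'n::finite^'n)
    = (\<chi> i j. if i = j then d i * e i else 0)"
proof -
  have "(\<Sum>l\<in>UNIV. (if a = l then d a else 0) * (if l = b then e l else 0))
        = (\<Sum>l\<in>UNIV. if l = a then (if a = b then d a * e a else 0) else (0::real))" for a b :: 'n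
    by (rule sum.cong) auto
  then show ?thesis by (simp add: matrix_matrix_mult_def vec_eq_iff)
qed

lemma half:
  fixes E :: "('v::finite \<times> 'v) set" and c :: "'v \<times> 'v \<Rightarrow> 'c"
    and F :: "('v \<times> 'v) set" and c' :: "'v \<times> 'v \<Rightarrow> 'd"
  assumes bE: "BPEC_DAG E c" and bF: "BPEC_DAG F c'" and sub: "model E c \<subseteq> model F c'"
    and ik: "(i,k) \<in> E"
  shows "(i,k) \<in> F \<and> (\<forall>a. (a,k) \<in> F \<longrightarrow> c'(a,k) = c'(i,k) \<longrightarrow> (a,k) \<in> E \<and> c (a,k) = c (i,k))"
proof -
  have acE: "acyclic E" and blE: "blocked E c" using bE unfolding BPEC_DAG_def is_DAG_def by auto
  have acF: "acyclic F" and blF: "blocked F c'" and prF: "properly_edge_colored F c'"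
    using bF unfolding BPEC_DAG_def is_DAG_def by auto
  define C where "C = {a. (a,k) \<in> E \<and> c(a,k) = c(i,k)}"
  have kC: "k \<notin> C" using acE unfolding C_def acyclic_def by auto
  have iC: "i \<in> C" using ik unfolding C_def by simp
  define N :: "real^'v^'v" where "N = (\<chi> a b. if b = k \<and> a \<in> C then 1 else 0)"
  have NN: "N ** N = 0"
  proof -
    have "(N ** N) $ a $ b = 0" for a b
      unfolding matrix_matrix_mult_def N_def using kC by (auto intro!: sum.neutral)
    then show ?thesis by (simp add: vec_eq_iff)
  qed
  define A where "A = mat 1 - N"
  define X where "X = mat 1 + N"
  have AX: "A ** X = mat 1" unfolding A_def X_def
    by (simp add: mm_diff_r matrix_add_ldistrib NN)
  have invA: "matrix_inv A = X" using inv_eq[OF AX] by blast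
  have XA: "X ** A = mat 1" using AX matrix_left_right_inverse by blast
  have diag1: "(\<chi> i j. if i = j then (\<lambda>_. 1::real) i else 0) = (mat 1 :: real^'v^'v)"
    by (simp add: mat_def)
  define Sig where "Sig = transpose X ** mat 1 ** X"
  have SigE: "Sig \<in> model E c"
    unfolding model_def
  proof (rule CollectI, intro exI conjI)
    show "Sig = transpose (matrix_inv (mat 1 - N)) ** (\<chi> i j. if i = j then (\<lambda>_. 1::real) i else 0) ** matrix_inv (mat 1 - N)"
      unfolding Sig_def diag1 invA[unfolded A_def] ..
    show "\<forall>i. 0 < (\<lambda>_. 1::real) i" by simp
    show "\<forall>i j. (i, j) \<notin> E \<longrightarrow> N $ i $ j = 0" unfolding N_def C_def by auto
    show "\<forall>i j ka l. (i, j) \<in> E \<longrightarrow> (ka, l) \<in> E \<longrightarrow> c (i, j) = c (ka, l) \<longrightarrow> N $ i $ j = N $ ka $ l"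
    proof (intro allI impI)
      fix p q r s assume pq: "(p,q) \<in> E" and rs: "(r,s) \<in> E" and cc: "c (p,q) = c (r,s)"
      show "N $ p $ q = N $ r $ s"
      proof (cases "c (p,q) = c (i,k)")
        case True
        then have "q = k" "s = k" using blE pq rs ik cc unfolding blocked_def by metis+
        then show ?thesis using True cc pq rs unfolding N_def C_def by simp
      next
        case False
        then have "N $ p $ q = 0" "N $ r $ s = 0" using cc unfolding N_def C_def by auto
        then show ?thesis by simp
      qed
    qed
  qed
  then have "Sig \<in> model F c'" using sub by blast
  then obtain L :: "real^'v^'v" and \<omega> where
      SigF: "Sig = transpose (matrix_inv (mat 1 - L)) ** (\<chi> i j. if i = j then \<omega> i else 0) ** matrix_inv (mat 1 - L)"
      and wpos: "\<forall>i. 0 < \<omega> i"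
      and suppL: "\<forall>i j. (i, j) \<notin> F \<longrightarrow> L $ i $ j = 0"
      and colL: "\<forall>i j ka l. (i, j) \<in> F \<longrightarrow> (ka, l) \<in> F \<longrightarrow> c' (i, j) = c' (ka, l) \<longrightarrow> L $ i $ j = L $ ka $ l"
    unfolding model_def by blast
  define B where "B = mat 1 - L"
  define M where "M = matrix_inv B"
  obtain X' where "B ** X' = mat 1" using acyc_inv[OF acF suppL] unfolding B_def by blast
  then have BM: "B ** M = mat 1" and MB: "M ** B = mat 1" unfolding M_def using inv_eq by blast+
  define Om :: "real^'v^'v" where "Om = (\<chi> i j. if i = j then \<omega> i else 0)"
  define D :: "real^'v^'v" where "D = (\<chi> i j. if i = j then 1 / \<omega> i else 0)"
  have wne: "\<forall>i. \<omega> i \<noteq> 0" using wpos by (metis less_irrefl)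
  have DOm: "D ** Om = mat 1" unfolding D_def Om_def diag_mult using wne
    by (simp add: mat_def vec_eq_iff)
  have SigF': "Sig = transpose M ** Om ** M" using SigF unfolding M_def B_def Om_def .
  define Lk where "Lk = B ** D ** transpose B"
  have TT: "transpose B ** transpose M = mat 1"
  proof -
    have "transpose B ** transpose M = transpose (M ** B)" by (simp only: matrix_transpose_mul)
    then show ?thesis using MB by simp
  qed
  have "Lk ** Sig = B ** D ** (transpose B ** transpose M) ** Om ** M"
    unfolding Lk_def SigF' by (simp only: matrix_mul_assoc)
  also have "\<dots> = B ** (D ** Om) ** M" unfolding TT by (simp only: matrix_mul_assoc matrix_mul_rid)
  also have "\<dots> = mat 1" unfolding DOm using BM by (simp only: matrix_mul_rid)
  finally have LS: "Lk ** Sig = mat 1" .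
  define Kx :: "real^'v^'v" where "Kx = (\<chi> a b. K0 C k a b)"
  have KA: "Kx = A ** transpose A" unfolding Kx_def A_def N_def using sq_K[OF kC] by (rule sym)
  have "Sig ** Kx = transpose X ** (X ** A) ** transpose A" unfolding Sig_def KA
    by (simp add: matrix_mul_assoc)
  also have "\<dots> = transpose (A ** X)" using XA by (simp add: matrix_transpose_mul)
  finally have SK: "Sig ** Kx = mat 1" using AX by simp
  have "Lk = Lk ** (Sig ** Kx)" using SK by simp
  also have "\<dots> = Kx" using LS by (simp add: matrix_mul_assoc)
  finally have LkK: "Lk = Kx" .
  have Kent: "(\<Sum>j\<in>UNIV. ((if a = j then 1 else 0) - L$a$j) * (1 / \<omega> j) * ((if b = j then 1 else 0) - L$b$j)) = K0 C k a b"
    for a b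
  proof -
    have "Kx $ a $ b = K0 C k a b" unfolding Kx_def by simp
    moreover have "Lk $ a $ b = (\<Sum>j\<in>UNIV. B$a$j * (1 / \<omega> j) * B$b$j)"
      unfolding Lk_def D_def by (rule diag_entry)
    moreover have "B $ x $ y = (if x = y then 1 else 0) - L$x$y" for x y
      unfolding B_def by (simp add: mat_def)
    ultimately show ?thesis using LkK by simp
  qed
  have colk: "\<forall>a. L$a$k = (if a \<in> C then 1 else 0)"
    by (rule core[where lam = "\<lambda>a b. L$a$b" and d = "\<lambda>j. 1 / \<omega> j", OF acF blF prF suppL colL kC Kent])
  have "L$i$k \<noteq> 0" using colk iC by simp
  then have ikF: "(i,k) \<in> F" using suppL by blast
  moreover have "\<forall>a. (a,k) \<in> F \<longrightarrow> c'(a,k) = c'(i,k) \<longrightarrow> (a,k) \<in> E \<and> c (a,k) = c (i,k)"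
  proof (intro allI impI)
    fix a assume that: "(a,k) \<in> F" "c'(a,k) = c'(i,k)"
    have "L$a$k = L$i$k" using colL[rule_format, OF that(1) ikF that(2)] .
    then have "a \<in> C" using colk iC by (simp split: if_splits)
    then show "(a,k) \<in> E \<and> c (a,k) = c (i,k)" unfolding C_def by simp
  qed
  ultimately show ?thesis by (rule conjI)
qed


theorem theorem5p13:
  fixes E :: "('v::finite \<times> 'v) set" and c :: "'v \<times> 'v \<Rightarrow> 'c"
    and F :: "('v \<times> 'v) set" and c' :: "'v \<times> 'v \<Rightarrow> 'd"
  assumes "BPEC_DAG E c" and "BPEC_DAG F c'"
    and "model E c = model F c'"
  shows "E = F \<and> (\<forall>e \<in> E. \<forall>f \<in> E. c e = c f \<longleftrightarrow> c' e = c' f)"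
proof -
  have s1: "model E c \<subseteq> model F c'" and s2: "model F c' \<subseteq> model E c" using assms(3) by auto
  have blE: "blocked E c" using assms(1) unfolding BPEC_DAG_def by auto
  have blF: "blocked F c'" using assms(2) unfolding BPEC_DAG_def by auto
  have EF: "E \<subseteq> F"
  proof
    fix e assume "e \<in> E"
    then obtain i k where e: "e = (i,k)" and "(i,k) \<in> E" by (cases e) auto
    then show "e \<in> F" using half[OF assms(1) assms(2) s1] by blast
  qed
  have FE: "F \<subseteq> E"
  proof
    fix e assume "e \<in> F"
    then obtain i k where e: "e = (i,k)" and "(i,k) \<in> F" by (cases e) auto
    then show "e \<in> E" using half[OF assms(2) assms(1) s2] by blast
  qed
  have "c e = c f \<longleftrightarrow> c' e = c' f" if eE: "e \<in> E" and fE: "f \<in> E" for e f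
  proof -
    obtain i k where e: "e = (i,k)" by (cases e)
    obtain a k' where f: "f = (a,k')" by (cases f)
    have ikE: "(i,k) \<in> E" using eE e by simp
    have akE: "(a,k') \<in> E" using fE f by simp
    have ikF: "(i,k) \<in> F" using EF ikE by blast
    have akF: "(a,k') \<in> F" using EF akE by blast
    show ?thesis
    proof
      assume cc: "c e = c f"
      then have cc': "c (i,k) = c (a,k')" using e f by simp
      have kk: "k' = k" using blE[unfolded blocked_def, rule_format, OF ikE akE cc'] by simp
      have H: "\<forall>a. (a,k) \<in> E \<longrightarrow> c (a,k) = c (i,k) \<longrightarrow> (a,k) \<in> F \<and> c' (a,k) = c' (i,k)"
        using half[OF assms(2) assms(1) s2 ikF] by (rule conjunct2)
      have "c' (a,k) = c' (i,k)" using H[rule_format, of a] akE cc' kk by simp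
      then show "c' e = c' f" using e f kk by simp
    next
      assume cc: "c' e = c' f"
      then have cc': "c' (i,k) = c' (a,k')" using e f by simp
      have kk: "k' = k" using blF[unfolded blocked_def, rule_format, OF ikF akF cc'] by simp
      have H: "\<forall>a. (a,k) \<in> F \<longrightarrow> c' (a,k) = c' (i,k) \<longrightarrow> (a,k) \<in> E \<and> c (a,k) = c (i,k)"
        using half[OF assms(1) assms(2) s1 ikE] by (rule conjunct2)
      have "c (a,k) = c (i,k)" using H[rule_format, of a] akF cc' kk by simp
      then show "c e = c f" using e f kk by simp
    qed
  qed
  then show ?thesis using EF FE by blast
qed


end
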